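(* Let $q$ be a prime power, let $\ell \geq 1$ and $n \geq 2\ell+1$ be integers, and put $k = n - \ell$. Let $f$ be a monic irreducible polynomial of degree $\ell$ over $\mathbb{F}_q$ with $\ell \times \ell$ companion matrix $M$, and let $\mathcal{C} = \mathrm{span}_{\mathbb{F}_q}(I, M, M^2, \ldots, M^{\ell-1}) \subseteq \mathbb{F}_q^{\ell \times \ell}$ (the matrix representation of $\mathbb{F}_{q^\ell}$ over $\mathbb{F}_q$), where $I$ is the $\ell \times \ell$ identity matrix. For a matrix $A$ write $[A]_1$ for its first column, and let $\mathbf{0}$ denote the $\ell \times (n-2\ell-1)$ zero matrix (empty if $n = 2\ell+1$). Define \[ \mathcal{G} = \bigl\{ \mathrm{rowspace}\,[\, I \mid A \mid [A^2]_1 \mid \mathbf{0}\,] : A \in \mathcal{C} \bigr\}, \] a family of subspaces of $\mathbb{F}_q^n$, and let $\mathcal{F} = \{ U^\perp : U \in \mathcal{G}\}$, where $U^\perp$ is the orthogonal complement of $U$ with respect to the standard bilinear form on $\mathbb{F}_q^n$. Then $\mathcal{F}$ is a family of $k$-dimensional subspaces of $\mathbb{F}_q^n$ of size $q^\ell = q^{n-k}$, and for every $s \geq 3$, $\mathcal{F}$ is set-like $s$-sunflower-free.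
   Context: A $k$-space means a $k$-dimensional subspace of $\mathbb{F}_q^n$. A family (a set, not a multiset) of $s$ distinct $k$-spaces $S_1, \ldots, S_s$ of $\mathbb{F}_q^n$ is a set-like $s$-sunflower with kernel $K$ if $K = S_i \cap S_j$ for all distinct $i, j$. A family of $k$-spaces is set-like $s$-sunflower-free if no $s$ of its members form a set-like $s$-sunflower. *)

theory Defs
  imports "HOL-Computational_Algebra.Polynomial"
begin

text \<open>Vectors of \<open>F^n\<close> are functions \<open>nat \<Rightarrow> 'a\<close> vanishing outside \<open>{0..<n}\<close>.\<close>
definition vecs :: "nat \<Rightarrow> (nat \<Rightarrow> 'a::zero) set" where
  "vecs n = {v. \<forall>i\<ge>n. v i = 0}"

definition span_list :: "(nat \<Rightarrow> 'a::comm_ring_1) list \<Rightarrow> (nat \<Rightarrow> 'a) set" where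
  "span_list vs = {(\<lambda>j. \<Sum>i<length vs. c i * (vs ! i) j) | c. True}"

definition lin_indep_list :: "(nat \<Rightarrow> 'a::comm_ring_1) list \<Rightarrow> bool" where
  "lin_indep_list vs \<longleftrightarrow>
     (\<forall>c. (\<forall>j. (\<Sum>i<length vs. c i * (vs ! i) j) = 0) \<longrightarrow> (\<forall>i<length vs. c i = 0))"

definition k_space :: "nat \<Rightarrow> nat \<Rightarrow> (nat \<Rightarrow> 'a::field) set \<Rightarrow> bool" where
  "k_space n k S \<longleftrightarrow>
     (\<exists>vs. length vs = k \<and> set vs \<subseteq> vecs n \<and> lin_indep_list vs \<and> S = span_list vs)"

definition perp :: "nat \<Rightarrow> (nat \<Rightarrow> 'a::field) set \<Rightarrow> (nat \<Rightarrow> 'a) set" where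
  "perp n U = {v \<in> vecs n. \<forall>u\<in>U. (\<Sum>j<n. u j * v j) = 0}"

definition mat_id :: "nat \<Rightarrow> nat \<Rightarrow> 'a::{zero,one}" where
  "mat_id i j = (if i = j then 1 else 0)"

definition mat_mult :: "nat \<Rightarrow> (nat \<Rightarrow> nat \<Rightarrow> 'a::comm_ring_1) \<Rightarrow> (nat \<Rightarrow> nat \<Rightarrow> 'a) \<Rightarrow> (nat \<Rightarrow> nat \<Rightarrow> 'a)" where
  "mat_mult l A B = (\<lambda>i j. \<Sum>r<l. A i r * B r j)"

fun mat_pow :: "nat \<Rightarrow> (nat \<Rightarrow> nat \<Rightarrow> 'a::comm_ring_1) \<Rightarrow> nat \<Rightarrow> (nat \<Rightarrow> nat \<Rightarrow> 'a)" where
  "mat_pow l A 0 = mat_id"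
| "mat_pow l A (Suc m) = mat_mult l (mat_pow l A m) A"

definition companion :: "nat \<Rightarrow> 'a::comm_ring_1 poly \<Rightarrow> (nat \<Rightarrow> nat \<Rightarrow> 'a)" where
  "companion l f = (\<lambda>i j. if j = l - 1 then - coeff f i else if i = j + 1 then 1 else 0)"

definition mat_algebra :: "nat \<Rightarrow> (nat \<Rightarrow> nat \<Rightarrow> 'a::comm_ring_1) \<Rightarrow> (nat \<Rightarrow> nat \<Rightarrow> 'a) set" where
  "mat_algebra l M =
     {(\<lambda>i j. if i < l \<and> j < l then (\<Sum>t<l. c t * mat_pow l M t i j) else 0) | c. True}"

text \<open>The \<open>l \<times> n\<close> matrix \<open>[I | A | [A^2]_1 | 0]\<close>, row \<open>i\<close> as a vector of \<open>F^n\<close>.\<close>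
definition gen_row :: "nat \<Rightarrow> nat \<Rightarrow> (nat \<Rightarrow> nat \<Rightarrow> 'a::comm_ring_1) \<Rightarrow> nat \<Rightarrow> (nat \<Rightarrow> 'a)" where
  "gen_row n l A i = (\<lambda>j. if j < l then mat_id i j
                          else if j < 2 * l then A i (j - l)
                          else if j = 2 * l then mat_mult l A A i 0
                          else 0)"

definition rowspace_gen :: "nat \<Rightarrow> nat \<Rightarrow> (nat \<Rightarrow> nat \<Rightarrow> 'a::comm_ring_1) \<Rightarrow> (nat \<Rightarrow> 'a) set" where
  "rowspace_gen n l A = span_list (map (gen_row n l A) [0..<l])"

definition family_G :: "nat \<Rightarrow> nat \<Rightarrow> 'a::comm_ring_1 poly \<Rightarrow> (nat \<Rightarrow> 'a) set set" where
  "family_G n l f = {rowspace_gen n l A | A. A \<in> mat_algebra l (companion l f)}"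

definition family_F :: "nat \<Rightarrow> nat \<Rightarrow> 'a::field poly \<Rightarrow> (nat \<Rightarrow> 'a) set set" where
  "family_F n l f = {perp n U | U. U \<in> family_G n l f}"

definition set_like_sunflower :: "nat \<Rightarrow> 'b set set \<Rightarrow> bool" where
  "set_like_sunflower s Fam \<longleftrightarrow>
     card Fam = s \<and> (\<exists>K. \<forall>S\<in>Fam. \<forall>T\<in>Fam. S \<noteq> T \<longrightarrow> S \<inter> T = K)"

definition set_like_sunflower_free :: "nat \<Rightarrow> 'b set set \<Rightarrow> bool" where
  "set_like_sunflower_free s F \<longleftrightarrow> \<not> (\<exists>Fam \<subseteq> F. set_like_sunflower s Fam)"

end

theory Submission imports Defs "HOL-Computational_Algebra.Polynomial_Factorial" "HOL-Library.FuncSet" begin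

lemma L0:
  fixes f :: "'a::field poly"
  assumes deg: "degree f = l" and lc: "lead_coeff f = 1" and l1: "l \<ge> 1" and s: "s < l"
  shows "(\<Sum>r<l. companion l f s r * coeff (q mod f) r) = coeff (pCons 0 q mod f) s"
proof -
  have f0: "f \<noteq> 0" using deg l1 by auto
  define d where "d = q mod f"
  have cl: "coeff (pCons 0 d) l = coeff d (l - 1)"
    using l1 by (cases l) auto
  have m: "pCons 0 q mod f = pCons 0 d - smult (coeff d (l - 1)) f"
  proof -
    have "coeff f l = 1" using lc deg by simp
    then show ?thesis using f0 cl by (simp add: mod_pCons_eq deg d_def)
  qed
  have split: "{..<l} = insert (l - 1) {..<l - 1}" using l1 by auto
  have "(\<Sum>r<l. companion l f s r * coeff d r)
      = - coeff f s * coeff d (l - 1) + (\<Sum>r<l - 1. companion l f s r * coeff d r)"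
    by (subst split, subst sum.insert) (auto simp: companion_def)
  also have "(\<Sum>r<l - 1. companion l f s r * coeff d r) = (\<Sum>r<l - 1. if r = s - 1 \<and> s \<noteq> 0 then coeff d r else 0)"
    by (rule sum.cong) (auto simp: companion_def)
  also have "\<dots> = (if s \<noteq> 0 then coeff d (s - 1) else 0)"
    using s by (cases s) (auto simp: sum.delta')
  finally show ?thesis unfolding d_def[symmetric] m
    by (cases s) (auto simp: algebra_simps)
qed

lemma L1:
  fixes f :: "'a::field poly"
  assumes deg: "degree f = l" and lc: "lead_coeff f = 1" and l1: "l \<ge> 1"
  shows "i < l \<Longrightarrow> (\<Sum>r<l. mat_pow l (companion l f) t i r * coeff (q mod f) r) = coeff (monom 1 t * q mod f) i"
proof (induction t arbitrary: q i)
  case 0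
  have "(\<Sum>r<l. mat_id i r * coeff (q mod f) r) = (\<Sum>r<l. if i = r then coeff (q mod f) r else 0)"
    by (rule sum.cong) (auto simp: mat_id_def)
  then show ?case using 0 by (simp add: sum.delta)
next
  case (Suc t)
  have "(\<Sum>r<l. mat_pow l (companion l f) (Suc t) i r * coeff (q mod f) r)
     = (\<Sum>r<l. \<Sum>s<l. mat_pow l (companion l f) t i s * companion l f s r * coeff (q mod f) r)"
    by (simp add: mat_mult_def sum_distrib_right)
  also have "\<dots> = (\<Sum>s<l. \<Sum>r<l. mat_pow l (companion l f) t i s * companion l f s r * coeff (q mod f) r)"
    by (rule sum.swap)
  also have "\<dots> = (\<Sum>s<l. mat_pow l (companion l f) t i s * (\<Sum>r<l. companion l f s r * coeff (q mod f) r))"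
    by (simp add: sum_distrib_left mult.assoc)
  also have "\<dots> = (\<Sum>s<l. mat_pow l (companion l f) t i s * coeff (pCons 0 q mod f mod f) s)"
    by (rule sum.cong) (auto simp: L0[OF deg lc l1])
  also have "\<dots> = coeff (monom 1 t * pCons 0 q mod f) i"
    using Suc.IH[where q = "pCons 0 q", OF Suc.prems] by simp
  also have "monom 1 t * pCons 0 q = monom 1 (Suc t) * q"
    by (simp add: monom_Suc mult_pCons_right mult_pCons_left)
  finally show ?case .
qed

lemma mod_sum_poly:
  fixes f :: "'a::field poly"
  shows "finite T \<Longrightarrow> (\<Sum>t\<in>T. g t) mod f = (\<Sum>t\<in>T. g t mod f)"
  by (induction T rule: finite_induct) (auto simp: poly_mod_add_left)

definition pv :: "nat \<Rightarrow> (nat \<Rightarrow> 'a::comm_ring_1) \<Rightarrow> 'a poly" where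
  "pv l c = (\<Sum>t<l. monom (c t) t)"

definition Mc :: "nat \<Rightarrow> 'a::comm_ring_1 poly \<Rightarrow> (nat \<Rightarrow> 'a) \<Rightarrow> (nat \<Rightarrow> nat \<Rightarrow> 'a)" where
  "Mc l f c = (\<lambda>i j. if i < l \<and> j < l then (\<Sum>t<l. c t * mat_pow l (companion l f) t i j) else 0)"

lemma MLem:
  fixes f :: "'a::field poly"
  assumes deg: "degree f = l" and lc: "lead_coeff f = 1" and l1: "l \<ge> 1" and i: "i < l"
  shows "(\<Sum>r<l. Mc l f c i r * coeff (q mod f) r) = coeff (pv l c * q mod f) i"
proof -
  have "(\<Sum>r<l. Mc l f c i r * coeff (q mod f) r)
      = (\<Sum>r<l. \<Sum>t<l. c t * mat_pow l (companion l f) t i r * coeff (q mod f) r)"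
    using i by (simp add: Mc_def sum_distrib_right)
  also have "\<dots> = (\<Sum>t<l. \<Sum>r<l. c t * mat_pow l (companion l f) t i r * coeff (q mod f) r)"
    by (rule sum.swap)
  also have "\<dots> = (\<Sum>t<l. c t * (\<Sum>r<l. mat_pow l (companion l f) t i r * coeff (q mod f) r))"
    by (simp add: sum_distrib_left mult.assoc)
  also have "\<dots> = (\<Sum>t<l. c t * coeff (monom 1 t * q mod f) i)"
    using L1[OF deg lc l1 i] by simp
  also have "\<dots> = coeff (\<Sum>t<l. smult (c t) (monom 1 t * q) mod f) i"
    by (simp add: coeff_sum mod_smult_left)
  also have "(\<Sum>t<l. smult (c t) (monom 1 t * q) mod f) = (\<Sum>t<l. smult (c t) (monom 1 t * q)) mod f"
    by (simp add: mod_sum_poly)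
  also have "(\<Sum>t<l. smult (c t) (monom 1 t * q)) = pv l c * q"
    by (simp add: pv_def sum_distrib_right smult_monom flip: mult_smult_left)
  finally show ?thesis .
qed

lemma coeff_pv: "coeff (pv l c) i = (if i < l then c i else 0)"
  by (simp add: pv_def coeff_sum sum.delta')

lemma deg_pv: "l \<ge> 1 \<Longrightarrow> degree (pv l c) < l"
proof -
  assume "l \<ge> 1"
  have "degree (pv l c) \<le> l - 1" by (rule degree_le) (auto simp: coeff_pv)
  then show ?thesis using \<open>l \<ge> 1\<close> by linarith
qed

lemma pv_mod:
  fixes f :: "'a::field poly"
  shows "degree f = l \<Longrightarrow> l \<ge> 1 \<Longrightarrow> pv l c mod f = pv l c"
  by (rule mod_poly_less) (simp add: deg_pv)

lemma Mc_col0: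
  fixes f :: "'a::field poly"
  assumes deg: "degree f = l" and lc: "lead_coeff f = 1" and l1: "l \<ge> 1" and i: "i < l"
  shows "Mc l f c i 0 = c i"
proof -
  have m1: "(1::'a poly) mod f = 1" by (rule mod_poly_less) (use deg l1 in simp)
  have "(\<Sum>r<l. Mc l f c i r * coeff ((1::'a poly) mod f) r) = (\<Sum>r<l. if r = 0 then Mc l f c i r else 0)"
    by (rule sum.cong) (auto simp: m1 coeff_1)
  also have "\<dots> = Mc l f c i 0" using l1 by (simp add: sum.delta)
  finally have "Mc l f c i 0 = coeff (pv l c * 1 mod f) i" using MLem[OF deg lc l1 i, of c 1] by simp
  then show ?thesis using pv_mod[OF deg l1] i by (simp add: coeff_pv)
qed

lemma Mc_mv:
  fixes f :: "'a::field poly"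
  assumes deg: "degree f = l" and lc: "lead_coeff f = 1" and l1: "l \<ge> 1" and i: "i < l"
  shows "(\<Sum>r<l. Mc l f c i r * coeff (pv l d) r) = coeff (pv l c * pv l d mod f) i"
  using MLem[OF deg lc l1 i, of c "pv l d"] pv_mod[OF deg l1, of d] by simp

lemma Mc_mult0:
  fixes f :: "'a::field poly"
  assumes deg: "degree f = l" and lc: "lead_coeff f = 1" and l1: "l \<ge> 1" and i: "i < l"
  shows "mat_mult l (Mc l f c) (Mc l f d) i 0 = coeff (pv l c * pv l d mod f) i"
proof -
  have "mat_mult l (Mc l f c) (Mc l f d) i 0 = (\<Sum>r<l. Mc l f c i r * coeff (pv l d) r)"
    unfolding mat_mult_def by (rule sum.cong) (auto simp: Mc_col0[OF deg lc l1] coeff_pv)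
  then show ?thesis using Mc_mv[OF assms] by simp
qed

lemma mat_algebra_Mc: "mat_algebra l (companion l f) = range (Mc l f)"
  unfolding mat_algebra_def Mc_def by auto

lemma Mc_eqI: "(\<forall>t<l. c t = d t) \<Longrightarrow> Mc l f c = Mc l f d"
  unfolding Mc_def by (intro ext) (auto intro!: sum.cong)

lemma pv_eq_Mc: "pv l c = pv l d \<Longrightarrow> Mc l f c = Mc l f d"
  by (rule Mc_eqI) (metis coeff_pv)

lemma perp_span:
  "perp n (span_list vs) = {v \<in> vecs n. \<forall>i<length vs. (\<Sum>j<n. (vs ! i) j * v j) = 0}"
proof (intro set_eqI iffI)
  fix v assume v: "v \<in> perp n (span_list vs)"
  have "(\<Sum>j<n. (vs ! i) j * v j) = 0" if i: "i < length vs" for i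
  proof -
    have "(\<lambda>j. \<Sum>k<length vs. (if k = i then 1 else 0) * (vs ! k) j) \<in> span_list vs"
      unfolding span_list_def by (rule CollectI) (rule exI[where x="\<lambda>k. if k = i then 1 else 0"], simp)
    moreover have "(\<lambda>j. \<Sum>k<length vs. (if k = i then 1 else 0) * (vs ! k) j) = vs ! i"
    proof
      fix j
      have "(\<Sum>k<length vs. (if k = i then 1 else 0) * (vs ! k) j) = (\<Sum>k<length vs. if k = i then (vs ! k) j else 0)"
        by (rule sum.cong) auto
      then show "(\<Sum>k<length vs. (if k = i then 1 else 0) * (vs ! k) j) = (vs ! i) j" using i by (simp add: sum.delta')
    qed
    ultimately have "vs ! i \<in> span_list vs" by simp
    then show ?thesis using v unfolding perp_def by blast
  qed
  then show "v \<in> {v \<in> vecs n. \<forall>i<length vs. (\<Sum>j<n. (vs ! i) j * v j) = 0}"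
    using v unfolding perp_def by blast
next
  fix v assume v: "v \<in> {v \<in> vecs n. \<forall>i<length vs. (\<Sum>j<n. (vs ! i) j * v j) = 0}"
  have "(\<Sum>j<n. u j * v j) = 0" if u: "u \<in> span_list vs" for u
  proof -
    obtain c where c: "u = (\<lambda>j. \<Sum>i<length vs. c i * (vs ! i) j)" using u unfolding span_list_def by blast
    have "(\<Sum>j<n. u j * v j) = (\<Sum>j<n. \<Sum>i<length vs. c i * (vs ! i) j * v j)"
      by (simp add: c sum_distrib_right)
    also have "\<dots> = (\<Sum>i<length vs. \<Sum>j<n. c i * (vs ! i) j * v j)" by (rule sum.swap)
    also have "\<dots> = (\<Sum>i<length vs. c i * (\<Sum>j<n. (vs ! i) j * v j))"
      by (simp add: sum_distrib_left mult.assoc)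
    also have "\<dots> = 0" using v by simp
    finally show ?thesis .
  qed
  then show "v \<in> perp n (span_list vs)" using v unfolding perp_def by blast
qed

lemma perp_rowspace:
  "perp n (rowspace_gen n l A) = {v \<in> vecs n. \<forall>i<l. (\<Sum>j<n. gen_row n l A i j * v j) = 0}"
  unfolding rowspace_gen_def perp_span by simp

lemma sum_split_shift:
  fixes g :: "nat \<Rightarrow> 'a::comm_monoid_add"
  assumes "l \<le> n"
  shows "(\<Sum>j<n. g j) = (\<Sum>j<l. g j) + (\<Sum>m<n - l. g (l + m))"
proof -
  have "(\<Sum>j<n. g j) = (\<Sum>j\<in>{..<l} \<union> {l..<n}. g j)"
    using assms by (intro sum.cong) auto
  also have "\<dots> = (\<Sum>j<l. g j) + (\<Sum>j\<in>{l..<n}. g j)"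
    by (rule sum.union_disjoint) auto
  also have "(\<Sum>j\<in>{l..<n}. g j) = (\<Sum>m<n - l. g (l + m))"
    by (rule sum.reindex_bij_witness[of _ "\<lambda>m. l + m" "\<lambda>j. j - l"]) auto
  finally show ?thesis .
qed

lemma gsplit:
  assumes i: "i < l" and ln: "l \<le> n"
  shows "(\<Sum>j<n. gen_row n l A i j * v j) = v i + (\<Sum>m<n - l. gen_row n l A i (l + m) * v (l + m))"
proof -
  have "(\<Sum>j<l. gen_row n l A i j * v j) = (\<Sum>j<l. if i = j then v j else 0)"
    by (rule sum.cong) (auto simp: gen_row_def mat_id_def)
  also have "\<dots> = v i" using i by (simp add: sum.delta)
  finally have h: "(\<Sum>j<l. gen_row n l A i j * v j) = v i" .
  show ?thesis using sum_split_shift[OF ln, of "\<lambda>j. gen_row n l A i j * v j"] h by simp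
qed

definition bv :: "nat \<Rightarrow> nat \<Rightarrow> (nat \<Rightarrow> nat \<Rightarrow> 'a::comm_ring_1) \<Rightarrow> nat \<Rightarrow> nat \<Rightarrow> 'a" where
  "bv n l A m = (\<lambda>j. if j = l + m then 1 else if j < l then - gen_row n l A j (l + m) else 0)"

lemma bv_inner:
  fixes A B :: "nat \<Rightarrow> nat \<Rightarrow> 'a::comm_ring_1"
  assumes i: "i < l" and ln: "l \<le> n" and m: "m < n - l"
  shows "(\<Sum>j<n. gen_row n l B i j * bv n l A m j) = gen_row n l B i (l + m) - gen_row n l A i (l + m)"
proof -
  have "(\<Sum>m'<n - l. gen_row n l B i (l + m') * bv n l A m (l + m')) = (\<Sum>m'<n - l. if m' = m then gen_row n l B i (l + m') else 0)"
    by (rule sum.cong) (auto simp: bv_def)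
  also have "\<dots> = gen_row n l B i (l + m)" using m by (simp add: sum.delta')
  finally show ?thesis using gsplit[OF i ln, of B "bv n l A m"] i by (simp add: bv_def)
qed

lemma bv_vecs: "m < n - l \<Longrightarrow> bv n l A m \<in> vecs n"
  by (auto simp: bv_def vecs_def)

lemma perp_kspace:
  fixes A :: "nat \<Rightarrow> nat \<Rightarrow> 'a::field"
  assumes ln: "l \<le> n"
  shows "k_space n (n - l) (perp n (rowspace_gen n l A))"
  unfolding k_space_def
proof (intro exI conjI)
  let ?vs = "map (bv n l A) [0..<n - l]"
  show "length ?vs = n - l" by simp
  show "set ?vs \<subseteq> vecs n" using bv_vecs by auto
  show "lin_indep_list ?vs"
    unfolding lin_indep_list_def
  proof (intro allI impI)
    fix c i assume h: "\<forall>j. (\<Sum>k<length ?vs. c k * (?vs ! k) j) = 0" and i: "i < length ?vs"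
    have "(\<Sum>k<length ?vs. c k * (?vs ! k) (l + i)) = (\<Sum>k<n - l. if k = i then c k else 0)"
      by (rule sum.cong) (auto simp: bv_def)
    also have "\<dots> = c i" using i by (simp add: sum.delta')
    finally show "c i = 0" using h by metis
  qed
  show "perp n (rowspace_gen n l A) = span_list ?vs"
  proof (intro set_eqI iffI)
    fix v assume v: "v \<in> perp n (rowspace_gen n l A)"
    then have vn: "v \<in> vecs n" and orth: "\<And>i. i < l \<Longrightarrow> (\<Sum>j<n. gen_row n l A i j * v j) = 0"
      unfolding perp_rowspace by auto
    have "v = (\<lambda>j. \<Sum>k<length ?vs. v (l + k) * (?vs ! k) j)"
    proof
      fix j
      show "v j = (\<Sum>k<length ?vs. v (l + k) * (?vs ! k) j)"
      proof (cases "j < l")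
        case True
        have "(\<Sum>k<length ?vs. v (l + k) * (?vs ! k) j) = - (\<Sum>k<n - l. gen_row n l A j (l + k) * v (l + k))"
          using True by (simp add: bv_def sum_negf[symmetric] mult.commute)
        moreover have "v j + (\<Sum>k<n - l. gen_row n l A j (l + k) * v (l + k)) = 0"
          using orth[OF True] gsplit[OF True ln, of A v] by simp
        then have "v j = - (\<Sum>k<n - l. gen_row n l A j (l + k) * v (l + k))"
          by (simp add: eq_neg_iff_add_eq_0)
        ultimately show ?thesis by simp
      next
        case False
        have "(\<Sum>k<length ?vs. v (l + k) * (?vs ! k) j) = (\<Sum>k<n - l. if k = j - l then v (l + k) else 0)"
          using False by (intro sum.cong) (auto simp: bv_def)
        also have "\<dots> = v j" using False vn by (auto simp: sum.delta' vecs_def)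
        finally show ?thesis by simp
      qed
    qed
    then show "v \<in> span_list ?vs" unfolding span_list_def
      by (intro CollectI exI[where x="\<lambda>k. v (l + k)"]) simp
  next
    fix v assume "v \<in> span_list ?vs"
    then obtain c where c: "v = (\<lambda>j. \<Sum>k<length ?vs. c k * (?vs ! k) j)" unfolding span_list_def by blast
    have "v \<in> vecs n" using c unfolding vecs_def bv_def by (auto intro!: sum.neutral)
    moreover have "(\<Sum>j<n. gen_row n l A i j * v j) = 0" if i: "i < l" for i
    proof -
      have "(\<Sum>j<n. gen_row n l A i j * v j) = (\<Sum>j<n. \<Sum>k<n - l. c k * (gen_row n l A i j * bv n l A k j))"
        by (simp add: c sum_distrib_left mult.commute mult.left_commute)
      also have "\<dots> = (\<Sum>k<n - l. \<Sum>j<n. c k * (gen_row n l A i j * bv n l A k j))" by (rule sum.swap)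
      also have "\<dots> = (\<Sum>k<n - l. c k * (\<Sum>j<n. gen_row n l A i j * bv n l A k j))"
        by (simp add: sum_distrib_left)
      also have "\<dots> = 0" using bv_inner[OF i ln, of _ A A] by (intro sum.neutral) simp
      finally show ?thesis .
    qed
    ultimately show "v \<in> perp n (rowspace_gen n l A)" unfolding perp_rowspace by blast
  qed
qed

lemma perp_inj:
  fixes A B :: "nat \<Rightarrow> nat \<Rightarrow> 'a::field"
  assumes n: "2 * l + 1 \<le> n"
    and A0: "\<And>i j. \<not> (i < l \<and> j < l) \<Longrightarrow> A i j = 0"
    and B0: "\<And>i j. \<not> (i < l \<and> j < l) \<Longrightarrow> B i j = 0"
    and eq: "perp n (rowspace_gen n l A) = perp n (rowspace_gen n l B)"
  shows "A = B"
proof (intro ext)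
  fix i m
  show "A i m = B i m"
  proof (cases "i < l \<and> m < l")
    case True
    have ln: "l \<le> n" and mn: "m < n - l" using n True by auto
    have "bv n l A m \<in> perp n (rowspace_gen n l A)"
      unfolding perp_rowspace using bv_vecs[OF mn] bv_inner[OF _ ln mn, of _ A A] by simp
    then have "bv n l A m \<in> perp n (rowspace_gen n l B)" using eq by simp
    then have "(\<Sum>j<n. gen_row n l B i j * bv n l A m j) = 0"
      unfolding perp_rowspace using True by blast
    then have "gen_row n l B i (l + m) = gen_row n l A i (l + m)"
      using bv_inner[OF _ ln mn, of i B A] True by simp
    then show ?thesis using True by (simp add: gen_row_def)
  next
    case False
    then show ?thesis using A0 B0 by simp
  qed
qed

lemma gexp:
  fixes A :: "nat \<Rightarrow> nat \<Rightarrow> 'a::comm_ring_1"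
  assumes n: "2 * l + 1 \<le> n"
  shows "(\<Sum>m<n - l. gen_row n l A i (l + m) * v (l + m))
       = (\<Sum>r<l. A i r * v (l + r)) + mat_mult l A A i 0 * v (2 * l)"
proof -
  have ln: "Suc l \<le> n - l" using n by auto
  have "(\<Sum>m<n - l. gen_row n l A i (l + m) * v (l + m))
      = (\<Sum>m<Suc l. gen_row n l A i (l + m) * v (l + m)) + (\<Sum>m<n - l - Suc l. gen_row n l A i (l + (Suc l + m)) * v (l + (Suc l + m)))"
    by (rule sum_split_shift[OF ln])
  also have "(\<Sum>m<n - l - Suc l. gen_row n l A i (l + (Suc l + m)) * v (l + (Suc l + m))) = 0"
    by (intro sum.neutral) (auto simp: gen_row_def)
  also have "(\<Sum>m<Suc l. gen_row n l A i (l + m) * v (l + m)) = (\<Sum>m<l. gen_row n l A i (l + m) * v (l + m)) + gen_row n l A i (l + l) * v (l + l)"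
    by simp
  also have "(\<Sum>m<l. gen_row n l A i (l + m) * v (l + m)) = (\<Sum>r<l. A i r * v (l + r))"
    by (rule sum.cong) (auto simp: gen_row_def)
  also have "gen_row n l A i (l + l) = mat_mult l A A i 0" by (simp add: gen_row_def)
  finally show ?thesis by (simp add: mult_2)
qed

definition sv :: "nat \<Rightarrow> 'a::field poly \<Rightarrow> 'a poly \<Rightarrow> 'a poly \<Rightarrow> nat \<Rightarrow> 'a" where
  "sv l f pa pb = (\<lambda>j. if j < l then coeff (pa * pb mod f) j
      else if j < 2 * l then - (coeff pa (j - l) + coeff pb (j - l))
      else if j = 2 * l then 1 else 0)"

lemma sv_inner:
  fixes f :: "'a::field poly"
  assumes deg: "degree f = l" and lc: "lead_coeff f = 1" and l1: "l \<ge> 1" and i: "i < l"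
    and n: "2 * l + 1 \<le> n"
  shows "(\<Sum>j<n. gen_row n l (Mc l f c) i j * sv l f (pv l a) (pv l b) j)
       = coeff (((pv l a - pv l c) * (pv l b - pv l c)) mod f) i"
proof -
  let ?C = "Mc l f c" and ?v = "sv l f (pv l a) (pv l b)"
  have ln: "l \<le> n" using n by simp
  have "(\<Sum>j<n. gen_row n l ?C i j * ?v j) = ?v i + (\<Sum>r<l. ?C i r * ?v (l + r)) + mat_mult l ?C ?C i 0 * ?v (2 * l)"
    using gsplit[OF i ln, of ?C ?v] gexp[OF n, of ?C i ?v] by (simp add: add.assoc)
  also have "(\<Sum>r<l. ?C i r * ?v (l + r)) = - (\<Sum>r<l. ?C i r * coeff (pv l a) r) - (\<Sum>r<l. ?C i r * coeff (pv l b) r)"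
    by (simp add: sv_def sum_negf[symmetric] sum_subtractf[symmetric] algebra_simps)
  also have "\<dots> = - coeff (pv l c * pv l a mod f) i - coeff (pv l c * pv l b mod f) i"
    using Mc_mv[OF deg lc l1 i] by simp
  also have "mat_mult l ?C ?C i 0 = coeff (pv l c * pv l c mod f) i"
    by (rule Mc_mult0[OF deg lc l1 i])
  also have "?v i = coeff (pv l a * pv l b mod f) i" using i by (simp add: sv_def)
  also have "((pv l a - pv l c) * (pv l b - pv l c)) = pv l a * pv l b - pv l c * pv l a - pv l c * pv l b + pv l c * pv l c"
    by (simp add: algebra_simps)
  ultimately show ?thesis using i by (simp add: poly_mod_add_left poly_mod_diff_left sv_def)
qed

lemma nz:
  fixes f :: "'a::field poly"
  assumes deg: "degree f = l" and l1: "l \<ge> 1" and irr: "irreducible f"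
    and ac: "pv l a \<noteq> pv l c" and bc: "pv l b \<noteq> pv l c"
  shows "\<exists>i<l. coeff (((pv l a - pv l c) * (pv l b - pv l c)) mod f) i \<noteq> 0"
proof -
  let ?g = "((pv l a - pv l c) * (pv l b - pv l c)) mod f"
  have f0: "f \<noteq> 0" using deg l1 by auto
  have pr: "prime_elem f" using irr by (rule field_poly_irreducible_imp_prime)
  have ndvd: "\<not> f dvd (pv l x - pv l c)" if "pv l x \<noteq> pv l c" for x
  proof
    assume "f dvd (pv l x - pv l c)"
    then have "degree f \<le> degree (pv l x - pv l c)" using that by (intro dvd_imp_degree_le) auto
    moreover have "degree (pv l x - pv l c) < l"
      using degree_diff_le_max[of "pv l x" "pv l c"] deg_pv[OF l1, of x] deg_pv[OF l1, of c] by linarith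
    ultimately show False using deg by simp
  qed
  have "?g \<noteq> 0"
  proof
    assume "?g = 0"
    then have "f dvd (pv l a - pv l c) * (pv l b - pv l c)" by (simp add: dvd_eq_mod_eq_0)
    then show False using prime_elem_dvd_mult_iff[OF pr] ndvd[OF ac] ndvd[OF bc] by blast
  qed
  moreover have "degree ?g < l" using degree_mod_less'[OF f0 \<open>?g \<noteq> 0\<close>] deg by simp
  ultimately show ?thesis by (intro exI[of _ "degree ?g"]) auto
qed

lemma card3:
  assumes "3 \<le> card X"
  shows "\<exists>a b c. a \<in> X \<and> b \<in> X \<and> c \<in> X \<and> a \<noteq> b \<and> a \<noteq> c \<and> b \<noteq> c"
proof -
  have fin: "finite X" using assms card.infinite by fastforce
  obtain a where a: "a \<in> X" using assms by fastforce
  have "2 \<le> card (X - {a})" using assms a fin by (simp add: card_Diff_singleton)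
  then have "X - {a} \<noteq> {}" by (metis card.empty not_numeral_le_zero)
  then obtain b where b: "b \<in> X - {a}" by blast
  have "1 \<le> card (X - {a} - {b})" using \<open>2 \<le> card (X - {a})\<close> b fin by (simp add: card_Diff_singleton)
  then have "X - {a} - {b} \<noteq> {}" by (metis card.empty not_one_le_zero)
  then obtain c where c: "c \<in> X - {a} - {b}" by blast
  show ?thesis using a b c by blast
qed

theorem mainTheorem1:
  fixes f :: "'a::{field,finite} poly" and l n k :: nat
  assumes "l \<ge> 1" and "n \<ge> 2 * l + 1" and "k = n - l"
    and "lead_coeff f = 1" and "degree f = l" and "irreducible f"
  shows "(\<forall>S\<in>family_F n l f. k_space n k S)
       \<and> card (family_F n l f) = card (UNIV :: 'a set) ^ l
       \<and> (\<forall>s\<ge>3. set_like_sunflower_free s (family_F n l f))"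
proof -
  note l1 = assms(1) and n = assms(2) and lc = assms(4) and deg = assms(5) and irr = assms(6)
  define \<Phi> where "\<Phi> c = perp n (rowspace_gen n l (Mc l f c))" for c :: "nat \<Rightarrow> 'a"
  have famF: "family_F n l f = range \<Phi>"
    unfolding family_F_def family_G_def mat_algebra_Mc \<Phi>_def by blast
  have Mc0: "\<And>i j. \<not> (i < l \<and> j < l) \<Longrightarrow> Mc l f c i j = 0" for c :: "nat \<Rightarrow> 'a"
    by (auto simp: Mc_def)
  have \<Phi>_inj: "\<Phi> c = \<Phi> d \<Longrightarrow> i < l \<Longrightarrow> c i = d i" for c d i
  proof -
    assume "\<Phi> c = \<Phi> d" "i < l"
    then have eq: "perp n (rowspace_gen n l (Mc l f c)) = perp n (rowspace_gen n l (Mc l f d))"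
      unfolding \<Phi>_def by simp
    have "Mc l f c = Mc l f d" by (rule perp_inj[OF n _ _ eq]) (auto simp: Mc_def)
    then show "c i = d i" using Mc_col0[OF deg lc l1 \<open>i < l\<close>] by metis
  qed
  have P1: "\<forall>S\<in>family_F n l f. k_space n k S"
    using perp_kspace[of l n] n assms(3) unfolding famF \<Phi>_def by auto
  have "range \<Phi> = \<Phi> ` (PiE {..<l} (\<lambda>_. UNIV))"
  proof
    show "range \<Phi> \<subseteq> \<Phi> ` (PiE {..<l} (\<lambda>_. UNIV))"
    proof
      fix S assume "S \<in> range \<Phi>"
      then obtain c where S: "S = \<Phi> c" by blast
      have "Mc l f c = Mc l f (restrict c {..<l})" by (rule Mc_eqI) simp
      then have "\<Phi> c = \<Phi> (restrict c {..<l})" unfolding \<Phi>_def by simp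
      then show "S \<in> \<Phi> ` (PiE {..<l} (\<lambda>_. UNIV))"
        by (intro image_eqI[where x = "restrict c {..<l}"]) (use S in auto)
    qed
  qed blast
  moreover have "inj_on \<Phi> (PiE {..<l} (\<lambda>_. UNIV))"
  proof (rule inj_onI)
    fix c d assume c: "c \<in> PiE {..<l} (\<lambda>_. UNIV)" and d: "d \<in> PiE {..<l} (\<lambda>_. UNIV)" and eq: "\<Phi> c = \<Phi> d"
    show "c = d" by (rule PiE_ext[OF c d]) (rule \<Phi>_inj[OF eq], simp)
  qed
  ultimately have P2: "card (family_F n l f) = card (UNIV :: 'a set) ^ l"
  proof -
    have "card (\<Phi> ` (PiE {..<l} (\<lambda>_. UNIV))) = card (PiE {..<l} (\<lambda>_. UNIV :: 'a set))"
      by (rule card_image) fact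
    also have "\<dots> = (\<Prod>i<l. card (UNIV :: 'a set))" by (rule card_PiE) simp
    also have "\<dots> = card (UNIV :: 'a set) ^ l" by simp
    finally show ?thesis unfolding famF using \<open>range \<Phi> = _\<close> by simp
  qed
  have P3: "set_like_sunflower_free s (family_F n l f)" if s: "s \<ge> 3" for s
    unfolding set_like_sunflower_free_def
  proof
    assume "\<exists>Fam\<subseteq>family_F n l f. set_like_sunflower s Fam"
    then obtain Fam K where sub: "Fam \<subseteq> range \<Phi>" and cs: "card Fam = s"
      and K: "\<forall>S\<in>Fam. \<forall>T\<in>Fam. S \<noteq> T \<longrightarrow> S \<inter> T = K"
      unfolding set_like_sunflower_def famF by blast
    obtain S1 S2 S3 where S: "S1 \<in> Fam" "S2 \<in> Fam" "S3 \<in> Fam" "S1 \<noteq> S2" "S1 \<noteq> S3" "S2 \<noteq> S3"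
      using card3[of Fam] cs s by auto
    obtain a b c where abc: "S1 = \<Phi> a" "S2 = \<Phi> b" "S3 = \<Phi> c" using S(1-3) sub by (meson image_iff subsetD)
    have ac: "pv l a \<noteq> pv l c" and bc: "pv l b \<noteq> pv l c"
      using S abc pv_eq_Mc[of l _ _ f] unfolding \<Phi>_def by metis+
    obtain i where i: "i < l" and ne: "coeff (((pv l a - pv l c) * (pv l b - pv l c)) mod f) i \<noteq> 0"
      using nz[OF deg l1 irr ac bc] by blast
    let ?v = "sv l f (pv l a) (pv l b)"
    have vn: "?v \<in> vecs n" using n by (auto simp: vecs_def sv_def)
    have "?v \<in> \<Phi> a" unfolding \<Phi>_def perp_rowspace using vn sv_inner[OF deg lc l1 _ n, where a=a and b=b and c=a] by simp
    moreover have "?v \<in> \<Phi> b" unfolding \<Phi>_def perp_rowspace using vn sv_inner[OF deg lc l1 _ n, where a=a and b=b and c=b] by simp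
    ultimately have "?v \<in> S1 \<inter> S2" using abc by simp
    also have "S1 \<inter> S2 = S1 \<inter> S3" using K S by metis
    finally have "?v \<in> \<Phi> c" using abc by simp
    then have "(\<Sum>j<n. gen_row n l (Mc l f c) i j * ?v j) = 0" unfolding \<Phi>_def perp_rowspace using i by blast
    then show False using sv_inner[OF deg lc l1 i n, where a=a and b=b and c=c] ne by simp
  qed
  show ?thesis using P1 P2 P3 by blast
qed

end
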